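(* Let $d,r:\mathbb{N}\to\mathbb{N}$ be functions such that $d$ is nondecreasing, takes only odd values at least $5$, and $d(n)\ge2r(n)+1$ for all $n$. Let $\alpha_n=(1\;2\;\cdots\;d(n))$, $\beta_n=(1\;(1+r(n))\;(1+2r(n)))\in\mathrm{Alt}(d(n))$, let $\alpha=(\alpha_n)_n,\beta=(\beta_n)_n\in\prod_n\mathrm{Alt}(d(n))$, $G=\langle\alpha,\beta\rangle$, let $\pi_n:\prod_k\mathrm{Alt}(d(k))\to\mathrm{Alt}(d(n))$ be the projection, and for $m\ge0$ let $L_m=\langle\alpha^j\beta\alpha^{-j}:|j|\le m\rangle\le G$. If $n$ is such that $\langle\alpha_n,\beta_n\rangle=\mathrm{Alt}(d(n))$, then $\pi_n(L_m)=\mathrm{Alt}(d(n))$ for all $m\ge d(n)\log d(n)/\log 2$.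
   Context: $\mathbb{N}=\{1,2,3,\dots\}$. *)

theory Defs
  imports "HOL-Algebra.Sym_Groups" "HOL-Algebra.Product_Groups" "HOL-Algebra.Generated_Groups"
    "HOL-Combinatorics.Cycles" Complex_Main
begin

abbreviation Nat1 :: "nat set" where "Nat1 \<equiv> {1..}"

definition AltProd :: "(nat \<Rightarrow> nat) \<Rightarrow> (nat \<Rightarrow> nat \<Rightarrow> nat) monoid" where
  "AltProd d = product_group Nat1 (\<lambda>n. alt_group (d n))"

definition alpha_n :: "(nat \<Rightarrow> nat) \<Rightarrow> nat \<Rightarrow> nat \<Rightarrow> nat" where
  "alpha_n d n = cycle_of_list [1..<d n + 1]"

definition beta_n :: "(nat \<Rightarrow> nat) \<Rightarrow> nat \<Rightarrow> nat \<Rightarrow> nat" where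
  "beta_n r n = cycle_of_list [1, 1 + r n, 1 + 2 * r n]"

definition alpha :: "(nat \<Rightarrow> nat) \<Rightarrow> nat \<Rightarrow> nat \<Rightarrow> nat" where
  "alpha d = (\<lambda>n\<in>Nat1. alpha_n d n)"

definition beta :: "(nat \<Rightarrow> nat) \<Rightarrow> nat \<Rightarrow> nat \<Rightarrow> nat" where
  "beta r = (\<lambda>n\<in>Nat1. beta_n r n)"

definition L :: "(nat \<Rightarrow> nat) \<Rightarrow> (nat \<Rightarrow> nat) \<Rightarrow> nat \<Rightarrow> (nat \<Rightarrow> nat \<Rightarrow> nat) set" where
  "L d r m = generate (AltProd d)
     {alpha d [^]\<^bsub>AltProd d\<^esub> j \<otimes>\<^bsub>AltProd d\<^esub> beta r \<otimes>\<^bsub>AltProd d\<^esub> alpha d [^]\<^bsub>AltProd d\<^esub> (- j)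
      | j :: int. \<bar>j\<bar> \<le> int m}"

definition proj :: "nat \<Rightarrow> (nat \<Rightarrow> nat \<Rightarrow> nat) \<Rightarrow> nat \<Rightarrow> nat" where
  "proj n x = x n"

end

theory Submission
  imports Defs
begin
lemma (in group) conj_gen:
  assumes T: "T \<subseteq> carrier G" and g: "g \<in> carrier G"
    and cl: "\<And>x. x \<in> T \<Longrightarrow> g \<otimes> x \<otimes> inv g \<in> generate G T"
    and y: "y \<in> generate G T"
  shows "g \<otimes> y \<otimes> inv g \<in> generate G T"
  using y
proof (induct y rule: generate.induct)
  case one thus ?case using g generate.one by auto
next
  case (incl h) thus ?case using cl by blast
next
  case (inv h)
  hence h: "h \<in> carrier G" using T by auto
  hence "inv (g \<otimes> h \<otimes> (inv g)) = g \<otimes> (inv h) \<otimes> (inv g)"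
    using g by (simp add: inv_mult_group m_assoc)
  thus ?case
    using generate_m_inv_closed[OF T cl[OF inv]] by simp
next
  case (eng h1 h2)
  note in_carrier = eng(1,3)[THEN generate_in_carrier[OF T]]
  have "g \<otimes> (h1 \<otimes> h2) \<otimes> inv g = (g \<otimes> h1 \<otimes> inv g) \<otimes> (g \<otimes> h2 \<otimes> inv g)"
    using in_carrier g by (simp add: inv_solve_left m_assoc)
  thus ?case
    using generate.eng[OF eng(2,4)] by simp
qed

lemma (in group) abstract_main:
  assumes a: "a \<in> carrier G" and b: "b \<in> carrier G"
    and gen: "generate G {a, b} = carrier G"
    and der: "derived G (carrier G) = carrier G"
  shows "generate G {a [^] j \<otimes> b \<otimes> a [^] (- j) | j :: int. True} = carrier G"
proof -
  define T where "T = {a [^] j \<otimes> b \<otimes> a [^] (- j) | j :: int. True}"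
  define H where "H = generate G T"
  have T: "T \<subseteq> carrier G" unfolding T_def using a b by auto
  have Hsub: "subgroup H G" unfolding H_def by (rule generate_is_subgroup[OF T])
  have bH: "b \<in> H"
  proof -
    have "b = a [^] (0::int) \<otimes> b \<otimes> a [^] (- 0::int)" using b by simp
    hence "b \<in> T" unfolding T_def by blast
    thus ?thesis unfolding H_def by (rule generate.incl)
  qed
  have conjT: "a [^] k \<otimes> x \<otimes> inv (a [^] k) \<in> T" if "x \<in> T" for x and k :: int
  proof -
    from that obtain j :: int where x: "x = a [^] j \<otimes> b \<otimes> a [^] (- j)" unfolding T_def by blast
    have "a [^] k \<otimes> x \<otimes> inv (a [^] k) = a [^] k \<otimes> a [^] j \<otimes> b \<otimes> (a [^] (- j) \<otimes> a [^] (- k))"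
      using a b by (simp add: x m_assoc int_pow_neg)
    also have "\<dots> = a [^] (k + j) \<otimes> b \<otimes> a [^] (- (k + j))"
      using a by (simp add: int_pow_mult[symmetric] add.commute)
    finally show ?thesis unfolding T_def by blast
  qed
  have conjH: "g \<otimes> y \<otimes> inv g \<in> H" if g: "g \<in> carrier G" and y: "y \<in> H" for g y
  proof -
    have "g \<in> generate G {a, b}" using g gen by simp
    thus ?thesis using y
    proof (induct g arbitrary: y rule: generate.induct)
      case one thus ?case using Hsub by (simp add: subgroup.mem_carrier)
    next
      case (incl h)
      show ?case
      proof (cases "h = a")
        case True
        have "a \<otimes> x \<otimes> inv a \<in> generate G T" if "x \<in> T" for x
          using conjT[OF that, of 1] a by (simp add: generate.incl)
        thus ?thesis using conj_gen[OF T a _ incl(2)[unfolded H_def]] True H_def by blast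
      next
        case False
        hence "h = b" using incl by auto
        thus ?thesis using incl(2) bH Hsub b
          by (simp add: subgroup.m_closed subgroup.m_inv_closed)
      qed
    next
      case (inv h)
      show ?case
      proof (cases "h = a")
        case True
        have ia: "inv a \<in> carrier G" using a by simp
        have "inv a \<otimes> x \<otimes> inv (inv a) \<in> generate G T" if "x \<in> T" for x
          using conjT[OF that, of "-1"] a by (simp add: generate.incl int_pow_neg)
        thus ?thesis using conj_gen[OF T ia _ inv(2)[unfolded H_def]] True H_def by blast
      next
        case False
        hence "h = b" using inv by auto
        thus ?thesis using inv(2) bH Hsub b
          by (simp add: subgroup.m_closed subgroup.m_inv_closed)
      qed
    next
      case (eng h1 h2)
      have c: "h1 \<in> carrier G" "h2 \<in> carrier G"
        using eng(1,3) gen by auto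
      have yc: "y \<in> carrier G" using eng(5) Hsub by (simp add: subgroup.mem_carrier)
      have "h2 \<otimes> y \<otimes> inv h2 \<in> H" using eng(4,5) by blast
      hence "h1 \<otimes> (h2 \<otimes> y \<otimes> inv h2) \<otimes> inv h1 \<in> H" using eng(2) by blast
      moreover have "h1 \<otimes> (h2 \<otimes> y \<otimes> inv h2) \<otimes> inv h1 = h1 \<otimes> h2 \<otimes> y \<otimes> inv (h1 \<otimes> h2)"
        using c yc by (simp add: m_assoc inv_mult_group)
      ultimately show ?case by simp
    qed
  qed
  have nH: "H \<lhd> G" by (rule normal_invI[OF Hsub conjH])
  interpret N: normal H G by (rule nH)
  define Q where "Q = G Mod H"
  define p where "p = (\<lambda>x. H #> x)"
  have Qg: "group Q" unfolding Q_def by (rule N.factorgroup_is_group)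
  have ph: "group_hom G Q p" unfolding p_def Q_def
    using N.r_coset_hom_Mod N.factorgroup_is_group
    by (simp add: group_hom_def group_hom_axioms_def is_group)
  interpret P: group_hom G Q p by (rule ph)
  interpret Q: group Q by (rule Qg)
  have pb: "p b = \<one>\<^bsub>Q\<^esub>" unfolding p_def Q_def using bH
    by (simp add: subgroup.rcos_const[OF Hsub is_group])
  have pa: "p a \<in> carrier Q" using a by simp
  have img: "p ` carrier G = generate Q {p a, p b}"
    using P.generate_img[of "{a,b}"] a b gen by simp
  have cq: "carrier Q = p ` carrier G"
    unfolding Q_def p_def FactGroup_def RCOSETS_def by auto
  have "generate Q {p a, p b} \<subseteq> generate Q {p a}"
    using group.generate_subgroup_incl[OF Qg _ group.generate_is_subgroup[OF Qg]] pa pb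
    by (simp add: generate.incl generate.one)
  also have "\<dots> = {p a [^]\<^bsub>Q\<^esub> k | k :: int. k \<in> UNIV}" by (rule group.generate_pow[OF Qg pa])
  finally have cyc: "carrier Q \<subseteq> {p a [^]\<^bsub>Q\<^esub> k | k :: int. k \<in> UNIV}" using img cq by simp
  have cQ: "comm_group Q"
  proof (rule group.group_comm_groupI[OF Qg])
    fix x y assume "x \<in> carrier Q" "y \<in> carrier Q"
    then obtain i j :: int where "x = p a [^]\<^bsub>Q\<^esub> i" "y = p a [^]\<^bsub>Q\<^esub> j" using cyc by blast
    thus "x \<otimes>\<^bsub>Q\<^esub> y = y \<otimes>\<^bsub>Q\<^esub> x" using pa
      by (simp add: group.int_pow_mult[OF Qg, symmetric] add.commute)
  qed
  have "derived Q (p ` carrier G) = {\<one>\<^bsub>Q\<^esub>}"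
    using comm_group.derived_eq_singleton[OF cQ] cq by simp
  moreover have "derived Q (p ` carrier G) = p ` carrier G"
    using P.derived_img[of "carrier G"] der by simp
  ultimately have all: "p g = \<one>\<^bsub>Q\<^esub>" if "g \<in> carrier G" for g using that by auto
  have "carrier G \<subseteq> H"
  proof
    fix g assume g: "g \<in> carrier G"
    have "g \<in> H #> g" using rcos_self[OF g Hsub] .
    moreover have "H #> g = H" using all[OF g] unfolding p_def Q_def by simp
    ultimately show "g \<in> H" by simp
  qed
  thus ?thesis using Hsub subgroup.subset unfolding H_def T_def by blast
qed

lemma alt_pow: "x [^]\<^bsub>alt_group n\<^esub> (k::nat) = x ^^ k"
  by (induct k) (simp_all add: alt_group_mult alt_group_one funpow_swap1)

lemma alpha_carrier:
  assumes "odd (d k)" shows "alpha_n d k \<in> carrier (alt_group (d k))"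
proof -
  have dist: "cycle [1..<d k + 1]" by simp
  have s: "set [1..<d k + 1] = {1..d k}" by auto
  have "swapidseq (length [1..<d k + 1] - 1) (alpha_n d k)"
    unfolding alpha_n_def by (rule swapidseq_ext_imp_swapidseq[OF swapidseq_ext_of_cycles[OF dist]])
  hence "evenperm (alpha_n d k)" using assms by (simp add: evenperm_unique)
  moreover have "alpha_n d k permutes {1..d k}" unfolding alpha_n_def using cycle_permutes[of "[1..<d k + 1]"] s by simp
  ultimately show ?thesis by (simp add: alt_group_carrier)
qed

lemma beta_carrier:
  assumes "r k \<ge> 1" "d k \<ge> 2 * r k + 1" shows "beta_n r k \<in> carrier (alt_group (d k))"
proof -
  have "beta_n r k \<in> three_cycles (d k)" unfolding beta_n_def
    apply (rule CollectI, rule exI[of _ "[1, 1 + r k, 1 + 2 * r k]"])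
    using assms by auto
  thus ?thesis using three_cycles_incl by blast
qed

lemma alpha_order:
  "alpha_n d k [^]\<^bsub>alt_group (d k)\<^esub> (d k) = \<one>\<^bsub>alt_group (d k)\<^esub>"
proof -
  let ?c = "cycle_of_list [1..<d k + 1]"
  have dist: "cycle [1..<d k + 1]" by simp
  have m: "map (?c ^^ d k) [1..<d k + 1] = [1..<d k + 1]"
    using cyclic_rotation[OF dist, of "d k"] by simp
  have "(?c ^^ d k) x = x" for x
  proof (cases "x \<in> set [1..<d k + 1]")
    case True
    then obtain i where "i < length [1..<d k + 1]" "[1..<d k + 1] ! i = x" by (meson in_set_conv_nth)
    thus ?thesis using m by (metis nth_map)
  next
    case False
    have "(?c ^^ d k) permutes set [1..<d k + 1]" by (rule permutes_funpow[OF cycle_permutes])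
    thus ?thesis using False by (simp add: permutes_not_in)
  qed
  thus ?thesis by (simp add: alt_pow alt_group_one alpha_n_def fun_eq_iff)
qed

theorem lemma3p3:
  fixes d r :: "nat \<Rightarrow> nat" and n m :: nat
  assumes d_mono: "\<And>a b. 1 \<le> a \<Longrightarrow> a \<le> b \<Longrightarrow> d a \<le> d b"
    and d_odd: "\<And>k. 1 \<le> k \<Longrightarrow> odd (d k)"
    and d_ge5: "\<And>k. 1 \<le> k \<Longrightarrow> d k \<ge> 5"
    and r_pos: "\<And>k. 1 \<le> k \<Longrightarrow> r k \<ge> 1"
    and d_r: "\<And>k. 1 \<le> k \<Longrightarrow> d k \<ge> 2 * r k + 1"
    and n_pos: "1 \<le> n"
    and gen: "generate (alt_group (d n)) {alpha_n d n, beta_n r n} = carrier (alt_group (d n))"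
    and m_big: "real m \<ge> real (d n) * ln (real (d n)) / ln 2"
  shows "proj n ` L d r m = carrier (alt_group (d n))"
proof -
  define G where "G = AltProd d"
  define A where "A = alt_group (d n)"
  define a where "a = alpha_n d n"
  define b where "b = beta_n r n"
  have Gg: "group G" unfolding G_def AltProd_def by (simp add: alt_group_is_group)
  have Ag: "group A" unfolding A_def by (simp add: alt_group_is_group)
  interpret A: group A by (rule Ag)
  interpret GG: group G by (rule Gg)
  have nN: "n \<in> Nat1" using n_pos by simp
  have al: "alpha d \<in> carrier G" unfolding G_def AltProd_def alpha_def
    using alpha_carrier d_odd by auto
  have be: "beta r \<in> carrier G" unfolding G_def AltProd_def beta_def
    using beta_carrier r_pos d_r by auto
  have hom: "proj n \<in> hom G A"
    unfolding hom_def G_def AltProd_def A_def proj_def using nN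
    by (auto simp: alt_group_mult PiE_iff)
  have gh: "group_hom G A (proj n)"
    using hom Gg Ag by (simp add: group_hom_def group_hom_axioms_def)
  interpret P: group_hom G A "proj n" by (rule gh)
  have pa: "proj n (alpha d) = a" unfolding proj_def alpha_def a_def using nN by simp
  have pb: "proj n (beta r) = b" unfolding proj_def beta_def b_def using nN by simp
  have ac: "a \<in> carrier A" using pa al hom by (metis P.hom_closed)
  have bc: "b \<in> carrier A" using pb be by (metis P.hom_closed)
  define S where "S = {alpha d [^]\<^bsub>G\<^esub> j \<otimes>\<^bsub>G\<^esub> beta r \<otimes>\<^bsub>G\<^esub> alpha d [^]\<^bsub>G\<^esub> (- j) | j :: int. \<bar>j\<bar> \<le> int m}"
  define S' where "S' = {a [^]\<^bsub>A\<^esub> j \<otimes>\<^bsub>A\<^esub> b \<otimes>\<^bsub>A\<^esub> a [^]\<^bsub>A\<^esub> (- j) | j :: int. \<bar>j\<bar> \<le> int m}"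
  define T where "T = {a [^]\<^bsub>A\<^esub> j \<otimes>\<^bsub>A\<^esub> b \<otimes>\<^bsub>A\<^esub> a [^]\<^bsub>A\<^esub> (- j) | j :: int. True}"
  have Sc: "S \<subseteq> carrier G" unfolding S_def using al be by auto
  have LS: "L d r m = generate G S" unfolding L_def S_def G_def by simp
  have imgS: "proj n ` S = S'"
  proof
    show "proj n ` S \<subseteq> S'" unfolding S_def S'_def using al be
      by (auto simp: P.hom_int_pow pa pb)
  next
    show "S' \<subseteq> proj n ` S"
    proof
      fix x assume "x \<in> S'"
      then obtain j :: int where j: "\<bar>j\<bar> \<le> int m" and x: "x = a [^]\<^bsub>A\<^esub> j \<otimes>\<^bsub>A\<^esub> b \<otimes>\<^bsub>A\<^esub> a [^]\<^bsub>A\<^esub> (- j)"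
        unfolding S'_def by blast
      have "x = proj n (alpha d [^]\<^bsub>G\<^esub> j \<otimes>\<^bsub>G\<^esub> beta r \<otimes>\<^bsub>G\<^esub> alpha d [^]\<^bsub>G\<^esub> (- j))"
      proof -
        have "proj n (alpha d [^]\<^bsub>G\<^esub> j \<otimes>\<^bsub>G\<^esub> beta r \<otimes>\<^bsub>G\<^esub> alpha d [^]\<^bsub>G\<^esub> (- j)) = a [^]\<^bsub>A\<^esub> j \<otimes>\<^bsub>A\<^esub> b \<otimes>\<^bsub>A\<^esub> a [^]\<^bsub>A\<^esub> (- j)"
          using al be by (simp add: P.hom_int_pow pa pb)
        thus ?thesis unfolding x by (rule sym)
      qed
      moreover have "alpha d [^]\<^bsub>G\<^esub> j \<otimes>\<^bsub>G\<^esub> beta r \<otimes>\<^bsub>G\<^esub> alpha d [^]\<^bsub>G\<^esub> (- j) \<in> S"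
        unfolding S_def using j by blast
      ultimately show "x \<in> proj n ` S" by blast
    qed
  qed
  have img: "proj n ` L d r m = generate A S'"
    using P.generate_img[OF Sc] LS imgS by simp
  have d5: "d n \<ge> 5" using d_ge5 n_pos by simp
  have dm: "d n \<le> m"
  proof -
    have "ln 2 \<le> ln (real (d n))" using d5 by simp
    hence "1 \<le> ln (real (d n)) / ln 2" by simp
    hence "real (d n) * 1 \<le> real (d n) * (ln (real (d n)) / ln 2)"
      by (intro mult_left_mono) auto
    thus ?thesis using m_big by simp
  qed
  have ad: "a [^]\<^bsub>A\<^esub> (int (d n)) = \<one>\<^bsub>A\<^esub>"
    using alpha_order[of d n] unfolding a_def A_def by (simp add: int_pow_int)
  have amod: "a [^]\<^bsub>A\<^esub> j = a [^]\<^bsub>A\<^esub> (j mod int (d n))" for j :: int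
  proof -
    have "j = int (d n) * (j div int (d n)) + j mod int (d n)" by simp
    hence "a [^]\<^bsub>A\<^esub> j = (a [^]\<^bsub>A\<^esub> int (d n)) [^]\<^bsub>A\<^esub> (j div int (d n)) \<otimes>\<^bsub>A\<^esub> a [^]\<^bsub>A\<^esub> (j mod int (d n))"
      using ac by (metis A.int_pow_mult A.int_pow_pow)
    thus ?thesis using ad ac by simp
  qed
  have TS: "T \<subseteq> generate A S'"
  proof
    fix x assume "x \<in> T"
    then obtain j :: int where x: "x = a [^]\<^bsub>A\<^esub> j \<otimes>\<^bsub>A\<^esub> b \<otimes>\<^bsub>A\<^esub> a [^]\<^bsub>A\<^esub> (- j)"
      unfolding T_def by blast
    define j' where "j' = j mod int (d n)"
    have "x = a [^]\<^bsub>A\<^esub> j' \<otimes>\<^bsub>A\<^esub> b \<otimes>\<^bsub>A\<^esub> a [^]\<^bsub>A\<^esub> (- j')"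
      unfolding x j'_def using ac A.int_pow_neg[OF ac, of j] A.int_pow_neg[OF ac, of "j mod int (d n)"] amod[of j] by simp
    moreover have "\<bar>j'\<bar> \<le> int m"
    proof -
      have dpos: "0 < int (d n)" using d5 by simp
      have "0 \<le> j mod int (d n)" "j mod int (d n) < int (d n)"
        using pos_mod_sign[OF dpos] pos_mod_bound[OF dpos] by auto
      thus ?thesis using dm by (simp add: j'_def)
    qed
    ultimately have "x \<in> S'" unfolding S'_def by blast
    thus "x \<in> generate A S'" by (rule generate.incl)
  qed
  have S'c: "S' \<subseteq> carrier A" unfolding S'_def using ac bc by auto
  have "carrier A = generate A T"
    using A.abstract_main[OF ac bc] gen derived_alt_group_const[OF d5]
    unfolding T_def A_def a_def b_def by simp
  also have "\<dots> \<subseteq> generate A S'"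
    by (rule A.generate_subgroup_incl[OF TS A.generate_is_subgroup[OF S'c]])
  finally have "carrier A \<subseteq> generate A S'" .
  moreover have "generate A S' \<subseteq> carrier A" by (rule A.generate_incl[OF S'c])
  ultimately show ?thesis using img A_def by auto
qed

end
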